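(* Let $\nu$ be an arbitrary complex number. The entire function $\mathbf{H}_\nu(\mathrm{e}^z)$ (for any branch of the Struve function $\mathbf{H}_\nu$) has infinite order of growth; in particular it is not subnormal.
   Context: The Struve function is $\mathbf{H}_\nu(\zeta)=(\zeta/2)^{\nu+1}\sum_{m\ge0}\frac{(-1)^m(\zeta^2/4)^m}{\Gamma(m+\frac32)\Gamma(\nu+m+\frac32)}$ (multivalued through $(\zeta/2)^{\nu+1}$); $\mathbf{H}_\nu(\mathrm{e}^z)$ is the entire function of $z$ obtained by analytic continuation along $\zeta=\mathrm{e}^z$. The order of an entire $f$ is $\limsup_{r\to\infty}\frac{\log\log M(r,f)}{\log r}$ and $f$ is subnormal if $\limsup_{r\to\infty}\frac{\log\log M(r,f)}{r}=0$, where $M(r,f)=\max_{|z|\le r}|f(z)|$. *)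

theory Defs
  imports "HOL-Analysis.Analysis"
begin

text \<open>Power series part of the Struve function, with zeta = exp z:
  sum over m of (-1)^m (zeta^2/4)^m / (Gamma(m+3/2) Gamma(nu+m+3/2)).\<close>
definition struve_series :: "complex \<Rightarrow> complex \<Rightarrow> complex" where
  "struve_series \<nu> z =
     (\<Sum>m. (-1)^m * (exp (2*z) / 4)^m * rGamma (of_nat m + 3/2) * rGamma (\<nu> + of_nat m + 3/2))"

text \<open>The branch k of H_nu(e^z): the multivalued factor (zeta/2)^(nu+1) along
  zeta = e^z is exp((nu+1)(z - ln 2 + 2 pi i k)) for some integer k.\<close>
definition struve_H_exp :: "complex \<Rightarrow> int \<Rightarrow> complex \<Rightarrow> complex" where
  "struve_H_exp \<nu> k z =
     exp ((\<nu> + 1) * (z - of_real (ln 2) + 2 * of_real pi * \<i> * of_int k)) * struve_series \<nu> z"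

definition max_modulus :: "(complex \<Rightarrow> complex) \<Rightarrow> real \<Rightarrow> real" where
  "max_modulus f r = Sup ((\<lambda>z. norm (f z)) ` cball 0 r)"

definition entire_order :: "(complex \<Rightarrow> complex) \<Rightarrow> ereal" where
  "entire_order f = Limsup at_top (\<lambda>r. ereal (ln (ln (max_modulus f r)) / ln r))"

definition subnormal :: "(complex \<Rightarrow> complex) \<Rightarrow> bool" where
  "subnormal f \<longleftrightarrow> Limsup at_top (\<lambda>r. ereal (ln (ln (max_modulus f r)) / r)) = 0"

end

theory Submission imports Defs "HOL-Complex_Analysis.Complex_Analysis" "HOL-Real_Asymp.Real_Asymp" begin

definition sa :: "complex \<Rightarrow> nat \<Rightarrow> complex" where
  "sa \<nu> m = rGamma (of_nat m + 3/2) * rGamma (\<nu> + of_nat m + 3/2)"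

lemma sa_rec: "sa \<nu> m = sa \<nu> (Suc m) * ((of_nat m + 3/2) * (\<nu> + of_nat m + 3/2))"
proof -
  have 1: "rGamma (of_nat m + 3/2 :: complex) = (of_nat m + 3/2) * rGamma (of_nat (Suc m) + 3/2)"
    using rGamma_plus1[of "of_nat m + 3/2 :: complex"] by (simp add: add_ac)
  have 2: "rGamma (\<nu> + of_nat m + 3/2) = (\<nu> + of_nat m + 3/2) * rGamma (\<nu> + of_nat (Suc m) + 3/2)"
    using rGamma_plus1[of "\<nu> + of_nat m + 3/2"] by (simp add: add_ac)
  show ?thesis unfolding sa_def 1 2 by (simp add: algebra_simps)
qed

lemma Re_pos_not_nonpos_Int: "Re z > 0 \<Longrightarrow> z \<notin> \<int>\<^sub>\<le>\<^sub>0"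
  by (auto elim!: nonpos_Ints_cases)

lemma sa_nonzero:
  assumes "real m \<ge> norm \<nu>" shows "sa \<nu> m \<noteq> 0"
proof -
  have "Re \<nu> \<ge> - norm \<nu>" using abs_Re_le_cmod[of \<nu>] by linarith
  hence "Re (\<nu> + of_nat m + 3/2) > 0" using assms by simp
  hence "rGamma (\<nu> + of_nat m + 3/2) \<noteq> 0"
    using Re_pos_not_nonpos_Int rGamma_eq_zero_iff by blast
  moreover have "Re (of_nat m + 3/2 :: complex) > 0" by simp
  hence "rGamma (of_nat m + 3/2 :: complex) \<noteq> 0"
    using Re_pos_not_nonpos_Int rGamma_eq_zero_iff by blast
  ultimately show ?thesis by (simp add: sa_def)
qed

lemma norm32: "norm (of_nat n + 3/2 :: complex) = real n + 3/2"
proof -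
  have "(of_nat n + 3/2 :: complex) = of_real (real n + 3/2)" by simp
  hence "norm (of_nat n + 3/2 :: complex) = norm (of_real (real n + 3/2) :: complex)" by simp
  also have "\<dots> = real n + 3/2" by (simp only: norm_of_real)
  finally show ?thesis .
qed

lemma conv_radius_sa: "conv_radius (\<lambda>m. (-1)^m * sa \<nu> m) = \<infinity>"
proof (rule conv_radius_ratio_limit_ereal)
  show "\<forall>\<^sub>F n in sequentially. (-1)^n * sa \<nu> n \<noteq> 0"
    using eventually_ge_at_top[of "nat \<lceil>norm \<nu>\<rceil>"]
    by eventually_elim (auto intro!: sa_nonzero)
  show "(\<lambda>n. ereal (norm ((-1)^n * sa \<nu> n) / norm ((-1)^Suc n * sa \<nu> (Suc n)))) \<longlonglongrightarrow> \<infinity>"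
    unfolding tendsto_PInfty
  proof
    fix r :: real
    show "\<forall>\<^sub>F x in sequentially. ereal r < ereal (norm ((-1)^x * sa \<nu> x) / norm ((-1)^Suc x * sa \<nu> (Suc x)))"
      using eventually_ge_at_top[of "nat \<lceil>norm \<nu> + \<bar>r\<bar> + 1\<rceil>"]
    proof eventually_elim
      case (elim n)
      have nz: "sa \<nu> (Suc n) \<noteq> 0" using elim by (intro sa_nonzero) linarith
      have q: "norm ((-1)^n * sa \<nu> n) / norm ((-1)^Suc n * sa \<nu> (Suc n))
           = norm (of_nat n + 3/2 :: complex) * norm (\<nu> + of_nat n + 3/2)"
        using nz by (subst sa_rec) (simp add: norm_mult norm_power)
      have a: "norm (of_nat n + 3/2 :: complex) \<ge> 1"
        by (simp add: norm32)
      have b: "norm (\<nu> + of_nat n + 3/2) \<ge> real n + 3/2 - norm \<nu>"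
      proof -
        have "norm (of_nat n + 3/2 :: complex) \<le> norm (\<nu> + of_nat n + 3/2) + norm \<nu>"
          using norm_triangle_ineq4[of "\<nu> + of_nat n + 3/2" \<nu>] by (simp add: algebra_simps)
        moreover have "norm (of_nat n + 3/2 :: complex) = real n + 3/2"
          by (rule norm32)
        ultimately show ?thesis by linarith
      qed
      have "real n \<ge> norm \<nu> + \<bar>r\<bar> + 1" using elim by linarith
      hence "r < norm (\<nu> + of_nat n + 3/2)" using b by linarith
      also have "\<dots> \<le> norm (of_nat n + 3/2 :: complex) * norm (\<nu> + of_nat n + 3/2)"
        using a by (simp add: mult_le_cancel_right1 )
      finally show ?case using q by simp
    qed
  qed
qed

lemma sa_lower:
  obtains \<delta> L m0 where "\<delta> > 0" "L \<ge> 1" "\<And>m. m \<ge> m0 \<Longrightarrow> \<delta> \<le> norm (sa \<nu> m) * (real m + L) ^ (2*m)"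
proof -
  define m0 where "m0 = nat \<lceil>norm \<nu>\<rceil>"
  define L where "L = norm \<nu> + 2"
  define \<delta> where "\<delta> = norm (sa \<nu> m0)"
  have m0: "real m0 \<ge> norm \<nu>" unfolding m0_def by linarith
  have "\<delta> > 0" unfolding \<delta>_def using sa_nonzero[OF m0] by simp
  moreover have "L \<ge> 1" unfolding L_def by simp
  moreover have "\<delta> \<le> norm (sa \<nu> m) * (real m + L) ^ (2*m)" if "m \<ge> m0" for m
    using that
  proof (induction m rule: dec_induct)
    case base
    have "1 \<le> (real m0 + L) ^ (2*m0)" using \<open>L \<ge> 1\<close> by (intro one_le_power) simp
    thus ?case unfolding \<delta>_def using mult_left_mono[of 1 "(real m0 + L) ^ (2*m0)" "norm (sa \<nu> m0)"] by simp
  next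
    case (step n)
    have e1: "norm (of_nat n + 3/2 :: complex) \<le> real (Suc n) + L"
      using norm32[of n] unfolding L_def by simp
    have e2: "norm (\<nu> + of_nat n + 3/2) \<le> real (Suc n) + L"
    proof -
      have "norm (\<nu> + (of_nat n + 3/2)) \<le> norm \<nu> + norm (of_nat n + 3/2 :: complex)"
        by (rule norm_triangle_ineq)
      thus ?thesis using norm32[of n] unfolding L_def by (simp add: add.assoc)
    qed
    have "norm (sa \<nu> n) = norm (sa \<nu> (Suc n)) * (norm (of_nat n + 3/2 :: complex) * norm (\<nu> + of_nat n + 3/2))"
      by (subst sa_rec) (simp add: norm_mult)
    also have "\<dots> \<le> norm (sa \<nu> (Suc n)) * ((real (Suc n) + L) * (real (Suc n) + L))"
      using \<open>L \<ge> 1\<close> by (intro mult_left_mono mult_mono e1 e2) auto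
    finally have A: "norm (sa \<nu> n) \<le> norm (sa \<nu> (Suc n)) * (real (Suc n) + L)^2"
      by (simp add: power2_eq_square)
    have "\<delta> \<le> norm (sa \<nu> n) * (real n + L) ^ (2*n)" by (rule step.IH)
    also have "\<dots> \<le> norm (sa \<nu> n) * (real (Suc n) + L) ^ (2*n)"
      using \<open>L \<ge> 1\<close> by (intro mult_left_mono power_mono) auto
    also have "\<dots> \<le> norm (sa \<nu> (Suc n)) * (real (Suc n) + L)^2 * (real (Suc n) + L) ^ (2*n)"
      using A by (intro mult_right_mono) auto
    also have "\<dots> = norm (sa \<nu> (Suc n)) * (real (Suc n) + L) ^ (2 * Suc n)"
      by (simp add: power_add[symmetric] mult.assoc)
    finally show ?case .
  qed
  ultimately show ?thesis using that by blast
qed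

definition sF :: "complex \<Rightarrow> complex fps" where
  "sF \<nu> = Abs_fps (\<lambda>m. (-1)^m * sa \<nu> m)"

lemma sF_radius: "fps_conv_radius (sF \<nu>) = \<infinity>"
  unfolding fps_conv_radius_def sF_def using conv_radius_sa by simp

lemma struve_series_eq: "struve_series \<nu> z = eval_fps (sF \<nu>) (exp (2*z) / 4)"
  unfolding struve_series_def eval_fps_def sF_def sa_def by (simp add: mult_ac)

lemma sF_holo: "eval_fps (sF \<nu>) holomorphic_on A"
  by (rule holomorphic_on_eval_fps) (simp add: sF_radius)

lemma sF_cont: "continuous_on A (eval_fps (sF \<nu>))"
  using sF_holo holomorphic_on_imp_continuous_on by blast

lemma sa_cauchy:
  assumes "\<rho> > 0" "\<And>w. norm w = \<rho> \<Longrightarrow> norm (eval_fps (sF \<nu>) w) \<le> B"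
  shows "norm (sa \<nu> m) * \<rho> ^ m \<le> B"
proof -
  have "norm ((deriv ^^ m) (eval_fps (sF \<nu>)) 0) \<le> fact m * B / \<rho> ^ m"
    by (rule Cauchy_inequality[OF sF_holo sF_cont assms(1)]) (use assms(2) in \<open>simp add: norm_minus_commute\<close>)
  moreover have "fps_nth (sF \<nu>) m = (deriv ^^ m) (eval_fps (sF \<nu>)) 0 / fact m"
    by (rule fps_nth_conv_deriv) (simp add: sF_radius)
  hence "(deriv ^^ m) (eval_fps (sF \<nu>)) 0 = fact m * ((-1)^m * sa \<nu> m)"
    by (simp add: sF_def field_simps)
  ultimately have "fact m * norm (sa \<nu> m) \<le> fact m * B / \<rho> ^ m"
    by (simp add: norm_mult norm_power)
  hence "fact m * norm (sa \<nu> m) \<le> fact m * (B / \<rho> ^ m)" by simp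
  hence "norm (sa \<nu> m) \<le> B / \<rho> ^ m"
    by (subst (asm) mult_le_cancel_left_pos) auto
  thus ?thesis using assms(1) by (simp add: field_simps)
qed

lemma struve_cont: "continuous_on A (struve_H_exp \<nu> k)"
proof -
  have "continuous_on A (\<lambda>z. eval_fps (sF \<nu>) (exp (2*z) / 4))"
    by (rule continuous_on_compose2[OF sF_cont[of UNIV]]) (auto intro!: continuous_intros)
  thus ?thesis unfolding struve_H_exp_def[abs_def] struve_series_eq
    by (auto intro!: continuous_intros)
qed

lemma mm_ge:
  assumes "continuous_on UNIV f" "norm z \<le> R"
  shows "norm (f z) \<le> max_modulus f R"
proof -
  have "compact ((\<lambda>z. norm (f z)) ` cball 0 R)"
    by (intro compact_continuous_image continuous_on_norm continuous_on_subset[OF assms(1)]) auto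
  hence "bdd_above ((\<lambda>z. norm (f z)) ` cball 0 R)"
    by (intro bounded_imp_bdd_above compact_imp_bounded)
  thus ?thesis unfolding max_modulus_def using assms(2) by (intro cSUP_upper) auto
qed

lemma circle_bound:
  assumes "\<rho> \<ge> 1" "norm w = \<rho>"
  shows "norm (eval_fps (sF \<nu>) w) \<le> max_modulus (struve_H_exp \<nu> k) (ln (4*\<rho>)/2 + pi/2)
           * exp (norm (\<nu>+1) * (ln (4*\<rho>)/2 + pi/2 + (ln 2 + 2*pi*\<bar>real_of_int k\<bar>)))"
proof -
  define R where "R = ln (4*\<rho>)/2 + pi/2"
  define z where "z = Ln (4*w) / 2"
  have w0: "4*w \<noteq> 0" using assms by auto
  have ez: "exp (2*z) / 4 = w" unfolding z_def using w0 by (simp add: exp_Ln)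
  have "Re z = ln (4*\<rho>)/2" unfolding z_def using w0 assms by (simp add: norm_mult)
  moreover have "\<bar>Im z\<bar> \<le> pi/2" unfolding z_def
    using Im_Ln_le_pi[OF w0] mpi_less_Im_Ln[OF w0] by simp
  moreover have "ln (4*\<rho>) \<ge> 0" using assms by simp
  ultimately have nz: "norm z \<le> R" unfolding R_def using cmod_le[of z] by simp
  define u where "u = (\<nu> + 1) * (z - of_real (ln 2) + 2 * of_real pi * \<i> * of_int k)"
  have "norm (z - of_real (ln 2) + 2 * of_real pi * \<i> * of_int k) \<le> norm z + ln 2 + 2*pi*\<bar>real_of_int k\<bar>"
  proof -
    have "norm (z - of_real (ln 2) + 2 * of_real pi * \<i> * of_int k) \<le> norm z + norm (of_real (ln 2) :: complex) + norm (2 * of_real pi * \<i> * of_int k :: complex)"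
      by (metis norm_triangle_ineq4 norm_triangle_le add_right_mono norm_triangle_ineq order_trans)
    thus ?thesis by (simp add: norm_mult)
  qed
  hence nu: "norm u \<le> norm (\<nu>+1) * (R + (ln 2 + 2*pi*\<bar>real_of_int k\<bar>))"
    unfolding u_def norm_mult using nz by (intro mult_left_mono) auto
  have fz: "struve_H_exp \<nu> k z = exp u * eval_fps (sF \<nu>) w"
    unfolding struve_H_exp_def struve_series_eq ez u_def ..
  have "norm (eval_fps (sF \<nu>) w) = norm (struve_H_exp \<nu> k z) * exp (- Re u)"
    unfolding fz by (simp add: norm_mult exp_minus field_simps)
  also have "\<dots> \<le> max_modulus (struve_H_exp \<nu> k) R * exp (norm (\<nu>+1) * (R + (ln 2 + 2*pi*\<bar>real_of_int k\<bar>)))"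
  proof (intro mult_mono)
    show "norm (struve_H_exp \<nu> k z) \<le> max_modulus (struve_H_exp \<nu> k) R"
      by (rule mm_ge[OF struve_cont nz])
    have "- Re u \<le> norm u" using abs_Re_le_cmod[of u] by linarith
    thus "exp (- Re u) \<le> exp (norm (\<nu>+1) * (R + (ln 2 + 2*pi*\<bar>real_of_int k\<bar>)))"
      using nu by simp
    show "0 \<le> max_modulus (struve_H_exp \<nu> k) R"
      using mm_ge[OF struve_cont nz] norm_ge_zero order_trans by blast
  qed auto
  finally show ?thesis unfolding R_def .
qed

lemma key:
  "\<exists>r\<ge>r0. r/2 \<le> ln (ln (max_modulus (struve_H_exp \<nu> k) r))"
proof -
  obtain \<delta> L m0 where d: "\<delta> > 0" and L: "L \<ge> 1"
    and low: "\<And>m. m \<ge> m0 \<Longrightarrow> \<delta> \<le> norm (sa \<nu> m) * (real m + L) ^ (2*m)"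
    using sa_lower by blast
  define A where "A = norm (\<nu>+1)"
  define D where "D = ln 2 + 2*pi*\<bar>real_of_int k\<bar>"
  have "eventually (\<lambda>x::real. exp ((ln(4*exp 2*(x+L)^2)/2 + pi/2)/2)
          \<le> ln \<delta> + 2*x - A*(ln(4*exp 2*(x+L)^2)/2 + pi/2 + D)) at_top"
    by real_asymp
  then obtain X where X: "\<And>x. x \<ge> X \<Longrightarrow> exp ((ln(4*exp 2*(x+L)^2)/2 + pi/2)/2)
          \<le> ln \<delta> + 2*x - A*(ln(4*exp 2*(x+L)^2)/2 + pi/2 + D)"
    by (auto simp: eventually_at_top_linorder)
  define m where "m = max m0 (nat \<lceil>max X (exp r0)\<rceil>)"
  have mX: "real m \<ge> X" and mr: "real m \<ge> exp r0" and mm0: "m \<ge> m0"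
    unfolding m_def by linarith+
  define \<rho> where "\<rho> = exp 2 * (real m + L)^2"
  define R where "R = ln (4*\<rho>)/2 + pi/2"
  define MM where "MM = max_modulus (struve_H_exp \<nu> k) R"
  have mL: "real m + L \<ge> 1" using L by simp
  have \<rho>1: "\<rho> \<ge> 1" unfolding \<rho>_def
  proof -
    have "1 \<le> (real m + L)^2" using mL by (simp add: one_le_power)
    moreover have "1 \<le> exp (2::real)" by simp
    ultimately show "1 \<le> exp 2 * (real m + L)^2" using mult_mono[of 1 "exp 2" 1 "(real m + L)^2"] by simp
  qed
  have Rr0: "R \<ge> r0"
  proof -
    have "ln (4*\<rho>) = ln 4 + ln (exp 2) + ln ((real m + L)^2)"
      unfolding \<rho>_def using mL by (simp add: ln_mult)
    also have "\<dots> = ln 4 + 2 + 2 * ln (real m + L)" using mL by (simp add: ln_realpow)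
    finally have e: "ln (4*\<rho>) = ln 4 + 2 + 2 * ln (real m + L)" .
    have "r0 = ln (exp r0)" by simp
    also have "\<dots> \<le> ln (real m + L)" using mr L by (subst ln_le_cancel_iff) auto
    finally have "r0 \<le> ln (real m + L)" .
    moreover have "ln (4::real) \<ge> 0" by simp
    moreover have "ln (real m + L) \<le> (ln 4 + 2 + 2*ln(real m+L))/2 + pi/2"
      using \<open>ln (4::real) \<ge> 0\<close> pi_gt_zero by (simp add: field_simps)
    ultimately show ?thesis unfolding R_def e by linarith
  qed
  have XX: "exp (R/2) \<le> ln \<delta> + 2*real m - A*(R + D)"
    using X[OF mX] unfolding R_def \<rho>_def by (simp add: mult.assoc)
  have "norm (sa \<nu> m) * \<rho> ^ m \<le> MM * exp (A * (R + D))"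
    by (rule sa_cauchy) (use \<rho>1 circle_bound[OF \<rho>1] in \<open>auto simp: MM_def R_def A_def D_def\<close>)
  moreover have "norm (sa \<nu> m) * \<rho> ^ m = norm (sa \<nu> m) * (real m + L) ^ (2*m) * exp (2 * real m)"
    unfolding \<rho>_def by (simp add: power_mult_distrib power_mult exp_of_nat_mult[symmetric] mult_ac power2_eq_square)
  moreover have "\<delta> * exp (2 * real m) \<le> norm (sa \<nu> m) * (real m + L) ^ (2*m) * exp (2 * real m)"
    using low[OF mm0] by (intro mult_right_mono) auto
  ultimately have ineq: "\<delta> * exp (2 * real m) \<le> MM * exp (A * (R + D))" by linarith
  have "exp (ln \<delta> + 2*real m - A*(R + D)) = \<delta> * exp (2 * real m) / exp (A * (R + D))"
    using d by (simp add: exp_add exp_diff)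
  also have "\<dots> \<le> MM" using ineq by (simp add: divide_le_eq)
  finally have e1: "exp (ln \<delta> + 2*real m - A*(R + D)) \<le> MM" .
  hence MMpos: "MM > 0" using exp_gt_zero order_less_le_trans by blast
  have "ln \<delta> + 2*real m - A*(R + D) \<le> ln MM"
    using e1 MMpos by (metis ln_exp ln_le_cancel_iff exp_gt_zero)
  hence "exp (R/2) \<le> ln MM" using XX by linarith
  hence "R/2 \<le> ln (ln MM)"
    by (metis exp_gt_zero ln_exp ln_le_cancel_iff order_less_le_trans)
  thus ?thesis using Rr0 unfolding MM_def by blast
qed

lemma Limsup_freq:
  fixes f :: "real \<Rightarrow> real"
  assumes "\<And>r0. \<exists>r\<ge>r0. c \<le> f r"
  shows "ereal c \<le> Limsup at_top (\<lambda>r. ereal (f r))"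
proof (rule Limsup_greatest)
  fix P assume "eventually P (at_top :: real filter)"
  then obtain N where N: "\<And>x. x \<ge> N \<Longrightarrow> P x" by (auto simp: eventually_at_top_linorder)
  obtain r where "r \<ge> N" "c \<le> f r" using assms by blast
  hence "ereal c \<le> ereal (f r)" "r \<in> Collect P" using N by auto
  thus "ereal c \<le> (SUP x\<in>Collect P. ereal (f x))" by (meson SUP_upper2)
qed

theorem corollary5p1:
  fixes \<nu> :: complex and k :: int
  shows "entire_order (struve_H_exp \<nu> k) = \<infinity> \<and> \<not> subnormal (struve_H_exp \<nu> k)"
proof
  let ?L = "\<lambda>r. ln (ln (max_modulus (struve_H_exp \<nu> k) r))"
  have "ereal B \<le> entire_order (struve_H_exp \<nu> k)" for B
    unfolding entire_order_def
  proof (rule Limsup_freq)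
    fix r0
    have "eventually (\<lambda>r::real. r / 2 / ln r \<ge> B \<and> r > 1) at_top"
      by (intro eventually_conj) real_asymp+
    then obtain N where N: "\<And>r. r \<ge> N \<Longrightarrow> r / 2 / ln r \<ge> B \<and> r > 1"
      by (auto simp: eventually_at_top_linorder)
    obtain r where r: "r \<ge> max r0 N" "r/2 \<le> ?L r" using key by blast
    have "ln r > 0" using N[of r] r by simp
    hence "r / 2 / ln r \<le> ?L r / ln r" using r by (intro divide_right_mono) auto
    thus "\<exists>r\<ge>r0. B \<le> ?L r / ln r" using N[of r] r by (intro exI[of _ r]) auto
  qed
  thus "entire_order (struve_H_exp \<nu> k) = \<infinity>"
    by (metis ereal_less_PInfty less_irrefl ereal_top)
  have "ereal (1/2) \<le> Limsup at_top (\<lambda>r. ereal (?L r / r))"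
  proof (rule Limsup_freq)
    fix r0
    obtain r where r: "r \<ge> max r0 1" "r/2 \<le> ?L r" using key by blast
    hence "1/2 \<le> ?L r / r" by (simp add: field_simps)
    thus "\<exists>r\<ge>r0. 1/2 \<le> ?L r / r" using r by auto
  qed
  thus "\<not> subnormal (struve_H_exp \<nu> k)" unfolding subnormal_def by (auto simp: zero_ereal_def)
qed

end
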